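(* Let $q$ be a prime power, $m$ a positive integer with $m\ne 2$, $n=q^{2m}-1$, and $\delta$ an integer with $2\le\delta\le n$. The primitive, narrow-sense BCH code $\mathcal{BCH}(n,q^2;\delta)$ over $\mathbf{F}_{q^2}$ contains its Hermitian dual code if and only if $$\delta\le\delta_{\max}=q^{m+[m\text{ even}]}-1-(q^2-2)[m\text{ even}].$$
   Context: For a prime power $Q$ and integer $M\ge1$, let $\alpha$ be a primitive element of $\mathbf{F}_{Q^M}$, $n=Q^M-1$, and $C_x=\{xQ^k\bmod n\mid k\in\mathbf{Z}\}$ the $Q$-ary cyclotomic coset of $x$ modulo $n$. For $2\le\delta\le n$, $\mathcal{BCH}(n,Q;\delta)$ is the cyclic code of length $n$ over $\mathbf{F}_Q$ with generator polynomial $\prod_{z\in Z}(x-\alpha^z)$, $Z=C_1\cup\cdots\cup C_{\delta-1}$. Here $Q=q^2$, $M=m$. The Hermitian dual of $C\subseteq\mathbf{F}_{q^2}^n$ is $C^{\perp_h}=\{y\mid y^q\cdot x=0\ \forall x\in C\}$ with $y^q=(y_1^q,\dots,y_n^q)$. Iverson notation: $[P]=1$ if $P$ holds and $0$ otherwise. *)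

theory Defs
  imports "HOL-Computational_Algebra.Computational_Algebra"
begin

definition prime_power :: "nat \<Rightarrow> bool" where
  "prime_power q \<longleftrightarrow> (\<exists>p k. prime p \<and> k \<ge> 1 \<and> q = p ^ k)"

definition subfield_of_order :: "nat \<Rightarrow> 'b::{field,finite} set" where
  "subfield_of_order Q = {x. x ^ Q = x}"

definition primitive_elem :: "'b::{field,finite} \<Rightarrow> bool" where
  "primitive_elem \<alpha> \<longleftrightarrow> (\<forall>x. x \<noteq> 0 \<longrightarrow> (\<exists>k::nat. x = \<alpha> ^ k))"

definition cyc_coset :: "nat \<Rightarrow> nat \<Rightarrow> nat \<Rightarrow> nat set" where
  "cyc_coset Q n x = {x * Q ^ k mod n | k. True}"

definition bch_defining_set :: "nat \<Rightarrow> nat \<Rightarrow> nat \<Rightarrow> nat set" where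
  "bch_defining_set Q n \<delta> = (\<Union>x\<in>{1..<\<delta>}. cyc_coset Q n x)"

definition bch_gen_poly :: "'b::{field,finite} \<Rightarrow> nat \<Rightarrow> nat \<Rightarrow> nat \<Rightarrow> 'b poly" where
  "bch_gen_poly \<alpha> Q n \<delta> = (\<Prod>z\<in>bch_defining_set Q n \<delta>. [:- (\<alpha> ^ z), 1:])"

definition words :: "nat \<Rightarrow> nat \<Rightarrow> (nat \<Rightarrow> 'b::{field,finite}) set" where
  "words Q n = {c. (\<forall>i. c i \<in> subfield_of_order Q) \<and> (\<forall>i\<ge>n. c i = 0)}"

definition word_poly :: "nat \<Rightarrow> (nat \<Rightarrow> 'b::comm_ring_1) \<Rightarrow> 'b poly" where
  "word_poly n c = (\<Sum>i<n. monom (c i) i)"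

definition cyclic_code :: "nat \<Rightarrow> nat \<Rightarrow> 'b::{field,finite} poly \<Rightarrow> (nat \<Rightarrow> 'b) set" where
  "cyclic_code Q n g = {c \<in> words Q n. g dvd word_poly n c}"

definition BCH :: "'b::{field,finite} \<Rightarrow> nat \<Rightarrow> nat \<Rightarrow> nat \<Rightarrow> (nat \<Rightarrow> 'b) set" where
  "BCH \<alpha> n Q \<delta> = cyclic_code Q n (bch_gen_poly \<alpha> Q n \<delta>)"

definition herm_dual :: "nat \<Rightarrow> nat \<Rightarrow> (nat \<Rightarrow> 'b::{field,finite}) set \<Rightarrow> (nat \<Rightarrow> 'b) set" where
  "herm_dual q n C = {y \<in> words (q^2) n. \<forall>x\<in>C. (\<Sum>i<n. y i ^ q * x i) = 0}"

end

theory Submission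
  imports Defs "HOL-Number_Theory.Residues"
begin


lemma pow_card_same:
  fixes x :: "'b::{field,finite}"
  shows "x ^ card (UNIV :: 'b set) = x"
proof (cases "x = 0")
  case False
  have "x * (\<Prod>y\<in>UNIV-{0}. x * y) = x * x ^ (card (UNIV :: 'b set) - 1) * \<Prod>(UNIV-{0})"
    by (simp add: prod.distrib mult_ac)
  also have "x * x ^ (card (UNIV :: 'b set) - 1) = x ^ Suc (card (UNIV :: 'b set) - 1)"
    by (subst power_Suc) auto
  also have "Suc (card (UNIV :: 'b set) - 1) = card (UNIV :: 'b set)"
    using finite_UNIV_card_ge_0[where ?'a = 'b] by simp
  also have "(\<Prod>y\<in>UNIV-{0}. x * y) = (\<Prod>y\<in>UNIV-{0}. y)"
    by (rule prod.reindex_bij_witness[of _ "\<lambda>y. y / x" "\<lambda>y. x * y"]) (use False in auto)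
  finally show ?thesis
    by simp
qed (use finite_UNIV_card_ge_0[where ?'a = 'b] in auto)

locale bchs =
  fixes q m :: nat and \<alpha> :: "'b::{field,finite}"
  assumes pp: "prime_power q" and m1: "m \<ge> 1"
    and cardF: "card (UNIV :: 'b set) = q ^ (2 * m)"
    and prim: "primitive_elem \<alpha>"
begin

abbreviation N where "N \<equiv> q ^ (2 * m)"
definition nn where "nn = q ^ (2 * m) - 1"
abbreviation QQ where "QQ \<equiv> q ^ 2"

lemma q_ge2: "q \<ge> 2"
proof -
  obtain p k where p: "prime p" "k \<ge> 1" "q = p ^ k" using pp unfolding prime_power_def by blast
  have p2: "p \<ge> 2" using p prime_ge_2_nat by blast
  have "p ^ 1 \<le> p ^ k" by (rule power_increasing) (use p p2 in auto)
  then have "q \<ge> p" using p by simp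
  then show ?thesis using p2 by simp
qed

lemma N_ge4: "N \<ge> 4"
proof -
  have "q ^ 2 \<le> q ^ (2 * m)" using q_ge2 m1 by (intro power_increasing) auto
  moreover have "q ^ 2 \<ge> 2 ^ 2" using q_ge2 by (intro power_mono) auto
  ultimately show ?thesis by simp
qed

lemma char_facts: "prime CHAR('b)" "\<exists>e. q = CHAR('b) ^ e" "CHAR('b) dvd q"
proof -
  obtain p k where p: "prime p" "k \<ge> 1" "q = p ^ k" using pp unfolding prime_power_def by blast
  have pos: "CHAR('b) > 0" by (rule finite_imp_CHAR_pos) simp
  show pr: "prime CHAR('b)" using prime_CHAR_semidom[OF pos] .
  have "CHAR('b) dvd p ^ (k * (2 * m))"
    using CHAR_dvd_CARD[where 'a='b] cardF p by (simp add: power_mult)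
  then have "CHAR('b) dvd p" using pr prime_dvd_power by blast
  then have "CHAR('b) = p" using pr p primes_dvd_imp_eq by blast
  then show "\<exists>e. q = CHAR('b) ^ e" using p by blast
  show "CHAR('b) dvd q" using p \<open>CHAR('b) = p\<close> by (simp add: dvd_power)
qed

lemma frob_sum: "(sum f A) ^ (q ^ j) = (\<Sum>i\<in>A. (f i :: 'b) ^ (q ^ j))"
proof -
  obtain e where e: "q = CHAR('b) ^ e" using char_facts by blast
  show ?thesis
    by (rule freshmans_dream_sum'[OF char_facts(1), of "q^j" "e*j"]) (simp add: e power_mult)
qed

lemma of_nat_nn: "(of_nat nn :: 'b) = -1"
proof -
  have "q dvd N" using m1 by (intro dvd_power) auto
  then have "CHAR('b) dvd N" using char_facts(3) dvd_trans by blast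
  then have "(of_nat N :: 'b) = 0" using of_nat_eq_0_iff_char_dvd by blast
  moreover have "N \<ge> 1" using N_ge4 by simp
  ultimately show ?thesis by (simp add: of_nat_diff nn_def)
qed

lemma pow_N: "(x::'b) ^ N = x" using pow_card_same[of x] cardF by simp

lemma alpha_nz: "\<alpha> \<noteq> 0"
proof
  assume a: "\<alpha> = 0"
  have "(UNIV :: 'b set) \<subseteq> {0, 1}"
  proof
    fix x :: 'b
    show "x \<in> {0,1}"
    proof (cases "x = 0")
      case False
      then obtain k where "x = \<alpha> ^ k" using prim unfolding primitive_elem_def by blast
      then show ?thesis using a by (cases k) auto
    qed simp
  qed
  then have "card (UNIV :: 'b set) \<le> 2"
    using card_mono[of "{0,1::'b}" UNIV] by (simp add: card_insert_if)
  then show False using N_ge4 cardF by simp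
qed


lemma alpha_nn: "\<alpha> ^ nn = 1"
proof -
  have NS: "N = Suc nn" using N_ge4 by (simp add: nn_def)
  have "\<alpha> ^ nn * \<alpha> = \<alpha> ^ N" unfolding NS by (rule power_Suc2[symmetric])
  then have "\<alpha> ^ nn * \<alpha> = 1 * \<alpha>" using pow_N by simp
  then show ?thesis using alpha_nz by (metis mult_right_cancel)
qed

lemma nn_pos: "nn > 0" using N_ge4 by (simp add: nn_def)

lemma alpha_mod: "\<alpha> ^ k = \<alpha> ^ (k mod nn)"
proof -
  have "\<alpha> ^ k = \<alpha> ^ (nn * (k div nn) + k mod nn)" by simp
  also have "\<dots> = \<alpha> ^ (k mod nn)" unfolding power_add power_mult alpha_nn by simp
  finally show ?thesis .
qed

lemma alpha_inj: "inj_on (\<lambda>k. \<alpha> ^ k) {..<nn}"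
proof (rule eq_card_imp_inj_on)
  have sub: "UNIV - {0} \<subseteq> (\<lambda>k. \<alpha> ^ k) ` {..<nn}"
  proof
    fix x :: 'b assume "x \<in> UNIV - {0}"
    then obtain k where "x = \<alpha> ^ k" using prim unfolding primitive_elem_def by blast
    then have "x = \<alpha> ^ (k mod nn)" using alpha_mod by simp
    moreover have "k mod nn < nn" using nn_pos by simp
    ultimately show "x \<in> (\<lambda>k. \<alpha> ^ k) ` {..<nn}" by blast
  qed
  have "card (UNIV - {0::'b}) = nn" using cardF by (simp add: card_Diff_singleton nn_def)
  then have "nn \<le> card ((\<lambda>k. \<alpha> ^ k) ` {..<nn})" using card_mono[OF _ sub] by simp
  moreover have "card ((\<lambda>k. \<alpha> ^ k) ` {..<nn}) \<le> nn" using card_image_le[of "{..<nn}"] by simp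
  ultimately show "card ((\<lambda>k. \<alpha> ^ k) ` {..<nn}) = card {..<nn}" by simp
qed simp

lemma alpha_eq: "\<alpha> ^ a = \<alpha> ^ b \<longleftrightarrow> a mod nn = b mod nn"
proof
  assume "\<alpha> ^ a = \<alpha> ^ b"
  then have "\<alpha> ^ (a mod nn) = \<alpha> ^ (b mod nn)" using alpha_mod[of a] alpha_mod[of b] by simp
  moreover have "a mod nn \<in> {..<nn}" "b mod nn \<in> {..<nn}" using nn_pos by auto
  ultimately show "a mod nn = b mod nn" using alpha_inj unfolding inj_on_def by blast
next
  assume "a mod nn = b mod nn"
  then show "\<alpha> ^ a = \<alpha> ^ b" using alpha_mod[of a] alpha_mod[of b] by simp
qed

lemma alpha_one: "\<alpha> ^ a = 1 \<longleftrightarrow> nn dvd a"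
  using alpha_eq[of a 0] by (simp add: mod_eq_0_iff_dvd)

lemma geom: "(\<Sum>i<nn. (\<alpha> ^ e) ^ i) = (if nn dvd e then of_nat nn else 0)"
proof (cases "nn dvd e")
  case True
  then have "\<alpha> ^ e = 1" using alpha_one by simp
  then show ?thesis using True by simp
next
  case False
  then have "\<alpha> ^ e \<noteq> 1" using alpha_one by simp
  moreover have "(\<alpha> ^ e) ^ nn = (\<alpha> ^ nn) ^ e" by (metis power_mult mult.commute)
  then have "(\<alpha> ^ e) ^ nn = 1" by (simp add: alpha_nn)
  ultimately show ?thesis using False by (simp add: sum_gp_strict)
qed

end

lemma prod_lin_dvd:
  fixes f :: "'x \<Rightarrow> 'a::field"
  assumes "finite A" "inj_on f A"
  shows "(\<Prod>a\<in>A. [:- f a, 1:]) dvd p \<longleftrightarrow> (\<forall>a\<in>A. poly p (f a) = 0)"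
  using assms
proof (induction A arbitrary: p rule: finite_induct)
  case empty
  then show ?case by simp
next
  case (insert a A)
  have inj: "inj_on f A" using insert.prems by (simp add: inj_on_insert)
  have fa: "f a \<notin> f ` A" using insert.prems insert.hyps by (simp add: inj_on_insert)
  show ?case
  proof
    assume d: "(\<Prod>b\<in>insert a A. [:- f b, 1:]) dvd p"
    have e: "(\<Prod>b\<in>insert a A. [:- f b, 1:]) = [:- f a, 1:] * (\<Prod>b\<in>A. [:- f b, 1:])"
      using insert.hyps by simp
    have "[:- f a, 1:] dvd p" using d unfolding e using dvd_mult_left by blast
    moreover have "(\<Prod>b\<in>A. [:- f b, 1:]) dvd p" using d unfolding e using dvd_mult_right by blast
    ultimately show "\<forall>b\<in>insert a A. poly p (f b) = 0"
      using insert.IH[OF inj] by (simp add: poly_eq_0_iff_dvd)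
  next
    assume r: "\<forall>b\<in>insert a A. poly p (f b) = 0"
    then have "(\<Prod>b\<in>A. [:- f b, 1:]) dvd p" using insert.IH[OF inj] by simp
    then obtain r where pr: "p = (\<Prod>b\<in>A. [:- f b, 1:]) * r" by blast
    have nz: "poly (\<Prod>b\<in>A. [:- f b, 1:]) (f a) \<noteq> 0"
      using fa insert.hyps by (auto simp: poly_prod prod_zero_iff)
    have "poly p (f a) = 0" using r by simp
    then have "poly r (f a) = 0" using nz pr by simp
    then have "[:- f a, 1:] dvd r" by (simp add: poly_eq_0_iff_dvd)
    then have "[:- f a, 1:] * (\<Prod>b\<in>A. [:- f b, 1:]) dvd p" unfolding pr
      by (metis mult.commute mult_dvd_mono dvd_refl)
    then show "(\<Prod>b\<in>insert a A. [:- f b, 1:]) dvd p" using insert.hyps by simp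
  qed
qed

lemma poly_word: "poly (word_poly n c) x = (\<Sum>i<n. c i * x ^ i)"
  by (simp add: word_poly_def poly_sum poly_monom)

context bchs
begin

lemma Zs_sub: "bch_defining_set QQ nn \<delta> \<subseteq> {..<nn}"
  using nn_pos by (auto simp: bch_defining_set_def cyc_coset_def)

lemma Zs_finite: "finite (bch_defining_set QQ nn \<delta>)"
  using Zs_sub finite_subset by blast

lemma Zs_elem: "z \<in> bch_defining_set QQ nn \<delta> \<Longrightarrow> \<exists>x k. 1 \<le> x \<and> x < \<delta> \<and> z = x * QQ ^ k mod nn"
  by (auto simp: bch_defining_set_def cyc_coset_def)

lemma Zs_intro: "1 \<le> x \<Longrightarrow> x < \<delta> \<Longrightarrow> x * QQ ^ k mod nn \<in> bch_defining_set QQ nn \<delta>"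
  by (auto simp: bch_defining_set_def cyc_coset_def)

lemma bch_mem:
  "c \<in> BCH \<alpha> nn QQ \<delta> \<longleftrightarrow> c \<in> words QQ nn \<and>
     (\<forall>z\<in>bch_defining_set QQ nn \<delta>. (\<Sum>i<nn. c i * (\<alpha> ^ z) ^ i) = 0)"
proof -
  have inj: "inj_on (\<lambda>z. \<alpha> ^ z) (bch_defining_set QQ nn \<delta>)"
    using alpha_inj Zs_sub inj_on_subset by blast
  show ?thesis
    unfolding BCH_def cyclic_code_def bch_gen_poly_def
    using prod_lin_dvd[OF Zs_finite inj, of "word_poly nn c"]
    by (simp add: poly_word)
qed


definition tr :: "'b \<Rightarrow> 'b" where "tr x = (\<Sum>k<m. x ^ (QQ ^ k))"

lemma QQm: "QQ ^ m = N" by (simp add: power_mult)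

lemma sub_pow: "(c::'b) ^ QQ = c \<Longrightarrow> c ^ (QQ ^ k) = c"
proof (induction k)
  case (Suc k)
  have "c ^ (QQ ^ Suc k) = (c ^ QQ) ^ (QQ ^ k)" by (simp add: power_mult mult.commute)
  then show ?case using Suc by simp
qed simp

lemma tr_QQ: "tr x ^ QQ = tr x"
proof -
  obtain m' where mm: "m = Suc m'" using m1 by (cases m) auto
  have "tr x ^ QQ = (\<Sum>k<m. (x ^ (QQ ^ k)) ^ (q ^ 2))" unfolding tr_def by (rule frob_sum)
  also have "\<dots> = (\<Sum>k<m. x ^ (QQ ^ Suc k))"
    by (intro sum.cong refl) (simp only: power_mult[symmetric] power_Suc2)
  also have "\<dots> = (\<Sum>k<m'. x ^ (QQ ^ Suc k)) + x ^ (QQ ^ m)" unfolding mm by simp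
  also have "x ^ (QQ ^ m) = x ^ (QQ ^ 0)" using pow_N[of x] QQm by simp
  also have "(\<Sum>k<m'. x ^ (QQ ^ Suc k)) + x ^ (QQ ^ 0) = (\<Sum>k<m. x ^ (QQ ^ k))"
    unfolding mm sum.lessThan_Suc_shift by simp
  finally show ?thesis unfolding tr_def .
qed

lemma exists_nonroot:
  assumes "K \<subseteq> {..<m}" "0 \<in> K"
  shows "\<exists>\<beta>::'b. (\<Sum>k\<in>K. \<beta> ^ (QQ ^ k)) \<noteq> 0"
proof (rule ccontr)
  assume "\<not> ?thesis"
  then have all: "\<forall>\<beta>::'b. (\<Sum>k\<in>K. \<beta> ^ (QQ ^ k)) = 0" by blast
  define P :: "'b poly" where "P = (\<Sum>k\<in>K. Polynomial.monom 1 (QQ ^ k))"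
  have fin: "finite K" using assms(1) finite_subset by blast
  have QQ4: "QQ \<ge> 4" using q_ge2 power_mono[of 2 q 2] by simp
  have "Polynomial.coeff P 1 = (\<Sum>k\<in>K. if QQ ^ k = 1 then 1 else 0)"
    unfolding P_def coeff_sum by (simp add: coeff_monom eq_commute)
  also have "\<dots> = (\<Sum>k\<in>K. if k = 0 then 1 else 0)"
    using QQ4 by (intro sum.cong) auto
  also have "\<dots> = 1" using fin assms(2) by simp
  finally have "P \<noteq> 0" by auto
  then have "card {x. poly P x = 0} \<le> degree P" by (rule card_poly_roots_bound)
  moreover have "{x. poly P x = 0} = UNIV"
    using all by (simp add: P_def poly_sum poly_monom)
  moreover have "degree P \<le> QQ ^ (m - 1)"
    unfolding P_def
  proof (rule degree_sum_le[OF fin])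
    fix k assume "k \<in> K"
    then have "k \<le> m - 1" using assms(1) by auto
    then have "QQ ^ k \<le> QQ ^ (m - 1)" using QQ4 by (intro power_increasing) auto
    then show "degree (Polynomial.monom (1::'b) (QQ ^ k)) \<le> QQ ^ (m - 1)"
      using degree_monom_le le_trans by blast
  qed
  moreover have "QQ ^ (m - 1) < QQ ^ m" using QQ4 m1 by (intro power_strict_increasing) auto
  ultimately show False using cardF QQm by simp
qed

lemma tr_nonzero: "\<exists>\<beta>. tr \<beta> \<noteq> 0"
  using exists_nonroot[of "{..<m}"] m1 unfolding tr_def by auto

definition cw :: "'b \<Rightarrow> nat \<Rightarrow> nat \<Rightarrow> 'b" where
  "cw \<beta> t i = (if i < nn then tr (\<beta> * \<alpha> ^ (i * t)) else 0)"

lemma cw_words: "cw \<beta> t \<in> words QQ nn"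
  using q_ge2 by (auto simp: words_def subfield_of_order_def cw_def tr_QQ)

lemma term_eq: "(\<beta> * \<alpha> ^ (i * t)) ^ (QQ ^ k) * (\<alpha> ^ z) ^ i = \<beta> ^ (QQ ^ k) * (\<alpha> ^ (t * QQ ^ k + z)) ^ i"
proof -
  have "(\<beta> * \<alpha> ^ (i * t)) ^ (QQ ^ k) * (\<alpha> ^ z) ^ i = \<beta> ^ (QQ ^ k) * (\<alpha> ^ (i * t * QQ ^ k) * \<alpha> ^ (z * i))"
    by (simp add: power_mult_distrib power_mult)
  also have "\<alpha> ^ (i * t * QQ ^ k) * \<alpha> ^ (z * i) = \<alpha> ^ ((t * QQ ^ k + z) * i)"
    by (simp add: power_add algebra_simps)
  also have "\<dots> = (\<alpha> ^ (t * QQ ^ k + z)) ^ i" by (simp add: power_mult)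
  finally show ?thesis .
qed

lemma cw_eval:
  "(\<Sum>i<nn. cw \<beta> t i * (\<alpha> ^ z) ^ i) =
     (\<Sum>k<m. \<beta> ^ (QQ ^ k) * (if nn dvd (t * QQ ^ k + z) then of_nat nn else 0))"
proof -
  have "(\<Sum>i<nn. cw \<beta> t i * (\<alpha> ^ z) ^ i) = (\<Sum>i<nn. \<Sum>k<m. (\<beta> * \<alpha> ^ (i * t)) ^ (QQ ^ k) * (\<alpha> ^ z) ^ i)"
    by (simp add: cw_def tr_def sum_distrib_right)
  also have "\<dots> = (\<Sum>i<nn. \<Sum>k<m. \<beta> ^ (QQ ^ k) * (\<alpha> ^ (t * QQ ^ k + z)) ^ i)"
    by (simp only: term_eq)
  also have "\<dots> = (\<Sum>k<m. \<beta> ^ (QQ ^ k) * (\<Sum>i<nn. (\<alpha> ^ (t * QQ ^ k + z)) ^ i))"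
    by (subst sum.swap) (simp add: sum_distrib_left)
  also have "\<dots> = (\<Sum>k<m. \<beta> ^ (QQ ^ k) * (if nn dvd (t * QQ ^ k + z) then of_nat nn else 0))"
    by (simp only: geom)
  finally show ?thesis .
qed


definition bad :: "nat \<Rightarrow> bool" where
  "bad \<delta> \<longleftrightarrow> (\<exists>x y e. 1 \<le> x \<and> x < \<delta> \<and> 1 \<le> y \<and> y < \<delta> \<and> \<alpha> ^ (x + q ^ (2 * e + 1) * y) = 1)"

lemma pow_NB: "(x::'b) ^ (N ^ b) = x"
proof (induction b)
  case (Suc b)
  have "x ^ (N ^ Suc b) = (x ^ (N ^ b)) ^ N" by (simp only: power_Suc2 power_mult)
  then show ?case using Suc pow_N by simp
qed simp

lemma cond:
  assumes nb: "\<not> bad \<delta>" and s: "s \<in> bch_defining_set QQ nn \<delta>" and z: "z \<in> bch_defining_set QQ nn \<delta>"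
  shows "\<not> nn dvd (s * q * QQ ^ k + z)"
proof
  assume "nn dvd (s * q * QQ ^ k + z)"
  then have e1: "\<alpha> ^ (s * q * QQ ^ k + z) = 1" by (simp add: alpha_one)
  obtain x a where x: "1 \<le> x" "x < \<delta>" "s = x * QQ ^ a mod nn" using Zs_elem[OF s] by blast
  obtain y b where y: "1 \<le> y" "y < \<delta>" "z = y * QQ ^ b mod nn" using Zs_elem[OF z] by blast
  have as: "\<alpha> ^ s = \<alpha> ^ (x * QQ ^ a)" using alpha_mod[of "x * QQ ^ a"] x by simp
  have az: "\<alpha> ^ z = \<alpha> ^ (y * QQ ^ b)" using alpha_mod[of "y * QQ ^ b"] y by simp
  have "\<alpha> ^ (s * q * QQ ^ k + z) = (\<alpha> ^ s) ^ (q * QQ ^ k) * \<alpha> ^ z"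
    by (simp add: power_add power_mult mult.assoc)
  also have "\<dots> = \<alpha> ^ (x * QQ ^ a * (q * QQ ^ k)) * \<alpha> ^ (y * QQ ^ b)"
    unfolding as az by (simp add: power_mult)
  also have "x * QQ ^ a * (q * QQ ^ k) = x * q ^ (2 * a + 2 * k + 1)"
    by (simp add: power_add power_mult)
  also have "y * QQ ^ b = y * q ^ (2 * b)" by (simp add: power_mult)
  finally have e2: "\<alpha> ^ (x * q ^ (2 * a + 2 * k + 1)) * \<alpha> ^ (y * q ^ (2 * b)) = 1" using e1 by simp
  define C where "C = (2 * m - 1) * (2 * b)"
  have "(\<alpha> ^ (x * q ^ (2 * a + 2 * k + 1)) * \<alpha> ^ (y * q ^ (2 * b))) ^ (q ^ C) = 1"
    using e2 by simp
  then have e3: "\<alpha> ^ (x * q ^ (2 * a + 2 * k + 1) * q ^ C) * \<alpha> ^ (y * q ^ (2 * b) * q ^ C) = 1"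
    by (simp add: power_mult_distrib power_mult)
  have h1: "1 + (2 * m - 1) = 2 * m" using m1 by simp
  have "2 * b + C = (1 + (2 * m - 1)) * (2 * b)" unfolding C_def by (simp only: add_mult_distrib)
  then have "2 * b + C = 2 * m * (2 * b)" unfolding h1 .
  then have "q ^ (2 * b + C) = N ^ (2 * b)" by (simp only: power_mult)
  then have "q ^ (2 * b) * q ^ C = N ^ (2 * b)" by (simp only: power_add)
  then have "y * q ^ (2 * b) * q ^ C = y * N ^ (2 * b)" by (simp only: mult.assoc)
  then have "\<alpha> ^ (y * q ^ (2 * b) * q ^ C) = \<alpha> ^ (y * N ^ (2 * b))" by (simp only:)
  also have "\<dots> = (\<alpha> ^ y) ^ (N ^ (2 * b))" by (rule power_mult)
  also have "\<dots> = \<alpha> ^ y" by (rule pow_NB)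
  finally have ay: "\<alpha> ^ (y * q ^ (2 * b) * q ^ C) = \<alpha> ^ y" .
  define e where "e = a + k + C div 2"
  have "C div 2 * 2 = C" unfolding C_def by simp
  then have ex: "x * q ^ (2 * a + 2 * k + 1) * q ^ C = q ^ (2 * e + 1) * x"
    unfolding e_def by (simp add: power_add[symmetric] algebra_simps)
  have "\<alpha> ^ (q ^ (2 * e + 1) * x) * \<alpha> ^ y = 1" using e3 unfolding ex ay .
  then have "\<alpha> ^ (y + q ^ (2 * e + 1) * x) = 1"
    by (metis power_add mult.commute)
  then have "bad \<delta>" unfolding bad_def using x y by blast
  then show False using nb by simp
qed


lemma suff:
  assumes nb: "\<not> bad \<delta>"
  shows "herm_dual q nn (BCH \<alpha> nn QQ \<delta>) \<subseteq> BCH \<alpha> nn QQ \<delta>"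
proof
  fix y assume y: "y \<in> herm_dual q nn (BCH \<alpha> nn QQ \<delta>)"
  have yw: "y \<in> words QQ nn" using y by (simp add: herm_dual_def)
  have orth: "\<And>c. c \<in> BCH \<alpha> nn QQ \<delta> \<Longrightarrow> (\<Sum>i<nn. y i ^ q * c i) = 0"
    using y by (simp add: herm_dual_def)
  have ysub: "\<And>i. y i ^ QQ = y i" using yw by (simp add: words_def subfield_of_order_def)
  have ysub2: "\<And>i k. (y i ^ q) ^ (QQ ^ k) = y i ^ q"
  proof -
    fix i k
    have "(y i ^ q) ^ QQ = (y i ^ QQ) ^ q" by (simp only: power_mult[symmetric] mult.commute)
    then have "(y i ^ q) ^ QQ = y i ^ q" using ysub by simp
    then show "(y i ^ q) ^ (QQ ^ k) = y i ^ q" by (rule sub_pow)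
  qed
  show "y \<in> BCH \<alpha> nn QQ \<delta>"
    unfolding bch_mem
  proof (intro conjI ballI yw)
    fix s assume s: "s \<in> bch_defining_set QQ nn \<delta>"
    define t where "t = s * q"
    define W where "W = (\<Sum>i<nn. y i ^ q * (\<alpha> ^ t) ^ i)"
    have cwin: "cw \<beta> t \<in> BCH \<alpha> nn QQ \<delta>" for \<beta>
      unfolding bch_mem
    proof (intro conjI ballI cw_words)
      fix z assume z: "z \<in> bch_defining_set QQ nn \<delta>"
      have "\<And>k. \<not> nn dvd (t * QQ ^ k + z)" unfolding t_def using cond[OF nb s z] by blast
      then show "(\<Sum>i<nn. cw \<beta> t i * (\<alpha> ^ z) ^ i) = 0" unfolding cw_eval by simp
    qed
    have trW: "tr (\<beta> * W) = (\<Sum>i<nn. y i ^ q * cw \<beta> t i)" for \<beta>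
    proof -
      have "tr (\<beta> * W) = (\<Sum>k<m. (\<Sum>i<nn. \<beta> * (y i ^ q * (\<alpha> ^ t) ^ i)) ^ (q ^ (2 * k)))"
        unfolding tr_def W_def by (simp add: sum_distrib_left power_mult)
      also have "\<dots> = (\<Sum>k<m. \<Sum>i<nn. (\<beta> * (y i ^ q * (\<alpha> ^ t) ^ i)) ^ (q ^ (2 * k)))"
        by (simp only: frob_sum)
      also have "\<dots> = (\<Sum>k<m. \<Sum>i<nn. y i ^ q * (\<beta> * \<alpha> ^ (i * t)) ^ (QQ ^ k))"
      proof (intro sum.cong refl)
        fix k i
        have qq: "q ^ (2 * k) = QQ ^ k" by (simp add: power_mult)
        have at: "(\<alpha> ^ t) ^ i = \<alpha> ^ (i * t)" by (metis power_mult mult.commute)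
        have "(\<beta> * (y i ^ q * (\<alpha> ^ t) ^ i)) ^ (q ^ (2 * k)) = (y i ^ q) ^ (QQ ^ k) * (\<beta> * \<alpha> ^ (i * t)) ^ (QQ ^ k)"
          unfolding qq at by (simp only: power_mult_distrib mult_ac)
        then show "(\<beta> * (y i ^ q * (\<alpha> ^ t) ^ i)) ^ (q ^ (2 * k)) = y i ^ q * (\<beta> * \<alpha> ^ (i * t)) ^ (QQ ^ k)"
          using ysub2 by simp
      qed
      also have "\<dots> = (\<Sum>i<nn. y i ^ q * cw \<beta> t i)"
        by (subst sum.swap) (simp add: cw_def tr_def sum_distrib_left)
      finally show ?thesis .
    qed
    have W0: "W = 0"
    proof (rule ccontr)
      assume "W \<noteq> 0"
      obtain \<beta>0 where b0: "tr \<beta>0 \<noteq> 0" using tr_nonzero by blast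
      have "tr \<beta>0 = tr ((\<beta>0 / W) * W)" using \<open>W \<noteq> 0\<close> by simp
      also have "\<dots> = (\<Sum>i<nn. y i ^ q * cw (\<beta>0 / W) t i)" by (rule trW)
      also have "\<dots> = 0" by (rule orth[OF cwin])
      finally show False using b0 by simp
    qed
    have "(\<Sum>i<nn. y i * (\<alpha> ^ s) ^ i) ^ (q ^ 1) = (\<Sum>i<nn. (y i * (\<alpha> ^ s) ^ i) ^ (q ^ 1))"
      by (rule frob_sum)
    also have "\<dots> = W" unfolding W_def t_def
    proof (intro sum.cong refl)
      fix i
      have "((\<alpha> ^ s) ^ i) ^ q = (\<alpha> ^ (s * q)) ^ i"
        by (simp only: power_mult[symmetric] mult.commute mult.left_commute)
      then show "(y i * (\<alpha> ^ s) ^ i) ^ (q ^ 1) = y i ^ q * (\<alpha> ^ (s * q)) ^ i"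
        by (simp add: power_mult_distrib)
    qed
    finally show "(\<Sum>i<nn. y i * (\<alpha> ^ s) ^ i) = 0" using W0 q_ge2 by simp
  qed
qed

lemma nec:
  assumes b: "bad \<delta>" and dn: "\<delta> \<le> nn"
  shows "\<not> herm_dual q nn (BCH \<alpha> nn QQ \<delta>) \<subseteq> BCH \<alpha> nn QQ \<delta>"
proof
  assume sub: "herm_dual q nn (BCH \<alpha> nn QQ \<delta>) \<subseteq> BCH \<alpha> nn QQ \<delta>"
  obtain x0 y0 e where xy: "1 \<le> x0" "x0 < \<delta>" "1 \<le> y0" "y0 < \<delta>" "\<alpha> ^ (x0 + q ^ (2 * e + 1) * y0) = 1"
    using b unfolding bad_def by blast
  have x0n: "x0 < nn" using xy dn by simp
  define t where "t = nn - x0"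
  define K where "K = {k \<in> {..<m}. nn dvd (t * QQ ^ k + x0)}"
  have K0: "0 \<in> K" unfolding K_def t_def using m1 x0n by simp
  have Ksub: "K \<subseteq> {..<m}" unfolding K_def by auto
  obtain \<beta> :: 'b where \<beta>: "(\<Sum>k\<in>K. \<beta> ^ (QQ ^ k)) \<noteq> 0"
    using exists_nonroot[OF Ksub K0] by blast
  have ax0: "\<alpha> ^ x0 \<noteq> 0" using alpha_nz by simp
  have "\<alpha> ^ t * \<alpha> ^ x0 = \<alpha> ^ (q ^ (2 * e + 1) * y0) * \<alpha> ^ x0"
  proof -
    have "\<alpha> ^ t * \<alpha> ^ x0 = \<alpha> ^ nn" unfolding t_def using x0n by (simp flip: power_add)
    also have "\<dots> = 1" by (rule alpha_nn)
    also have "\<dots> = \<alpha> ^ (q ^ (2 * e + 1) * y0) * \<alpha> ^ x0" using xy(5) by (simp add: power_add mult.commute)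
    finally show ?thesis .
  qed
  then have at: "\<alpha> ^ t = \<alpha> ^ (q ^ (2 * e + 1) * y0)" using ax0 mult_right_cancel by blast
  have indual: "cw \<beta> t \<in> herm_dual q nn (BCH \<alpha> nn QQ \<delta>)"
    unfolding herm_dual_def
  proof (intro CollectI conjI ballI)
    show "cw \<beta> t \<in> words (q ^ 2) nn" using cw_words .
    fix c assume c: "c \<in> BCH \<alpha> nn QQ \<delta>"
    have croot: "\<And>z. z \<in> bch_defining_set QQ nn \<delta> \<Longrightarrow> (\<Sum>i<nn. c i * (\<alpha> ^ z) ^ i) = 0"
      using c unfolding bch_mem by blast
    have ck: "(\<Sum>i<nn. c i * (\<alpha> ^ (t * QQ ^ k * q)) ^ i) = 0" for k
    proof -
      have "\<alpha> ^ (t * QQ ^ k * q) = (\<alpha> ^ t) ^ (QQ ^ k * q)" by (simp add: power_mult mult.assoc)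
      also have "\<dots> = \<alpha> ^ (q ^ (2 * e + 1) * y0 * (QQ ^ k * q))" unfolding at by (simp add: power_mult)
      also have "q ^ (2 * e + 1) * y0 * (QQ ^ k * q) = y0 * QQ ^ (e + k + 1)"
      proof -
        have h1: "QQ ^ k = q ^ (2 * k)" "QQ ^ (e + k + 1) = q ^ (2 * (e + k + 1))"
          by (simp_all only: power_mult)
        have h2: "2 * (e + k + 1) = (2 * e + 1) + 2 * k + 1" by simp
        have "q ^ (2 * (e + k + 1)) = q ^ (2 * e + 1) * q ^ (2 * k) * q"
          unfolding h2 by (simp only: power_add power_one_right)
        then show ?thesis unfolding h1 by (simp only: mult_ac)
      qed
      also have "\<alpha> ^ (y0 * QQ ^ (e + k + 1)) = \<alpha> ^ (y0 * QQ ^ (e + k + 1) mod nn)" by (rule alpha_mod)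
      finally have "\<alpha> ^ (t * QQ ^ k * q) = \<alpha> ^ (y0 * QQ ^ (e + k + 1) mod nn)" .
      moreover have "y0 * QQ ^ (e + k + 1) mod nn \<in> bch_defining_set QQ nn \<delta>"
        using Zs_intro xy by blast
      ultimately show ?thesis using croot by simp
    qed
    have "(\<Sum>i<nn. cw \<beta> t i ^ q * c i) = (\<Sum>i<nn. (\<Sum>k<m. (\<beta> * \<alpha> ^ (i * t)) ^ (QQ ^ k)) ^ (q ^ 1) * c i)"
      by (simp add: cw_def tr_def)
    also have "\<dots> = (\<Sum>i<nn. \<Sum>k<m. ((\<beta> * \<alpha> ^ (i * t)) ^ (QQ ^ k)) ^ (q ^ 1) * c i)"
      by (simp only: frob_sum sum_distrib_right)
    also have "\<dots> = (\<Sum>i<nn. \<Sum>k<m. \<beta> ^ (QQ ^ k * q) * (c i * (\<alpha> ^ (t * QQ ^ k * q)) ^ i))"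
    proof (intro sum.cong refl)
      fix i k
      have "((\<beta> * \<alpha> ^ (i * t)) ^ (QQ ^ k)) ^ (q ^ 1) = \<beta> ^ (QQ ^ k * q) * \<alpha> ^ (i * t * (QQ ^ k * q))"
        by (simp add: power_mult_distrib power_mult)
      also have "\<alpha> ^ (i * t * (QQ ^ k * q)) = (\<alpha> ^ (t * QQ ^ k * q)) ^ i"
        by (simp only: power_mult[symmetric] mult_ac)
      finally show "((\<beta> * \<alpha> ^ (i * t)) ^ (QQ ^ k)) ^ (q ^ 1) * c i = \<beta> ^ (QQ ^ k * q) * (c i * (\<alpha> ^ (t * QQ ^ k * q)) ^ i)"
        by (simp add: mult_ac)
    qed
    also have "\<dots> = (\<Sum>k<m. \<beta> ^ (QQ ^ k * q) * (\<Sum>i<nn. c i * (\<alpha> ^ (t * QQ ^ k * q)) ^ i))"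
      by (subst sum.swap) (simp add: sum_distrib_left)
    also have "\<dots> = 0" using ck by simp
    finally show "(\<Sum>i<nn. cw \<beta> t i ^ q * c i) = 0" .
  qed
  then have "cw \<beta> t \<in> BCH \<alpha> nn QQ \<delta>" using sub by blast
  moreover have x0Z: "x0 \<in> bch_defining_set QQ nn \<delta>" using Zs_intro[of x0 \<delta> 0] xy x0n by simp
  ultimately have "(\<Sum>i<nn. cw \<beta> t i * (\<alpha> ^ x0) ^ i) = 0" unfolding bch_mem by blast
  moreover have "(\<Sum>i<nn. cw \<beta> t i * (\<alpha> ^ x0) ^ i) = - (\<Sum>k\<in>K. \<beta> ^ (QQ ^ k))"
  proof -
    have "(\<Sum>i<nn. cw \<beta> t i * (\<alpha> ^ x0) ^ i) =
          (\<Sum>k<m. (if nn dvd (t * QQ ^ k + x0) then \<beta> ^ (QQ ^ k) else 0) * of_nat nn)"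
      unfolding cw_eval by (intro sum.cong refl) simp
    also have "\<dots> = (\<Sum>k<m. (if nn dvd (t * QQ ^ k + x0) then \<beta> ^ (QQ ^ k) else 0)) * of_nat nn"
      by (simp only: sum_distrib_right)
    also have "(\<Sum>k<m. (if nn dvd (t * QQ ^ k + x0) then \<beta> ^ (QQ ^ k) else 0)) = (\<Sum>k\<in>K. \<beta> ^ (QQ ^ k))"
      unfolding K_def by (rule sum.inter_filter[symmetric]) simp
    finally show ?thesis using of_nat_nn by simp
  qed
  ultimately show False using \<beta> by simp
qed

end


definition Dm :: "nat \<Rightarrow> nat \<Rightarrow> nat" where
  "Dm q m = (if even m then q ^ (m + 1) - q ^ 2 + 1 else q ^ m - 1)"

lemma arithA:
  fixes q m x y j :: nat
  assumes q2: "q \<ge> 2" and m1: "m \<ge> 1" and xn: "x < q ^ (2 * m) - 1" and x1: "1 \<le> x"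
    and dv: "(q ^ (2 * m) - 1) dvd (x + q ^ j * y)" and jm: "j \<le> m" and je: "even m \<Longrightarrow> j < m"
  shows "Dm q m \<le> x \<or> Dm q m \<le> y"
proof (cases "even m")
  case False
  define a where "a = q ^ m"
  have "q ^ 1 \<le> q ^ m" using q2 m1 by (intro power_increasing) auto
  then have a2: "a \<ge> 2" using q2 unfolding a_def by simp
  have N: "q ^ (2 * m) = a * a" unfolding a_def by (simp add: mult_2 power_add)
  have D: "Dm q m = a - 1" using False unfolding Dm_def a_def by simp
  show ?thesis
  proof (rule ccontr)
    assume "\<not> ?thesis"
    then have xa: "x < a - 1" and ya: "y \<le> a - 2" unfolding D by auto
    have qj: "q ^ j \<le> a" unfolding a_def using q2 jm by (intro power_increasing) auto
    have "q ^ j * y \<le> a * (a - 2)" using qj ya by (rule mult_le_mono)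
    moreover have "a * (a - 2) = a * a - 2 * a" by (simp add: diff_mult_distrib2)
    ultimately have B: "q ^ j * y \<le> a * a - 2 * a" by simp
    have aa: "a * a \<ge> 2 * a" using a2 by simp
    obtain c where c: "x + q ^ j * y = (a * a - 1) * c" using dv unfolding N by blast
    have "c \<noteq> 0"
    proof
      assume "c = 0"
      then have "x + q ^ j * y = 0" using c by simp
      then show False using x1 by simp
    qed
    moreover have "\<not> c \<ge> 2"
    proof
      assume "c \<ge> 2"
      then have "(a * a - 1) * 2 \<le> (a * a - 1) * c" by (rule mult_le_mono2)
      then show False using c B xa aa a2 by linarith
    qed
    ultimately have "c = 1" by linarith
    then have "x + q ^ j * y = a * a - 1" using c by simp
    then show False using B xa aa a2 by linarith
  qed
next
  case True
  define b where "b = q ^ (m - 1)"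
  define c2 where "c2 = q ^ 2"
  have c2: "c2 \<ge> 4" unfolding c2_def using q2 power_mono[of 2 q 2] by simp
  have b1: "b \<ge> 1" unfolding b_def using q2 by simp
  have e1: "q ^ (m + 1) = b * c2" unfolding b_def c2_def using m1
    by (simp flip: power_add)
  have ex: "2 * m = (m - 1) + (m - 1) + 2" using m1 by simp
  have e2: "q ^ (2 * m) = b * b * c2" unfolding b_def c2_def by (simp only: ex power_add)
  have D: "Dm q m = b * c2 - c2 + 1" using True unfolding Dm_def e1 c2_def by simp
  have bc: "b * c2 \<ge> c2" using b1 by simp
  show ?thesis
  proof (rule ccontr)
    assume "\<not> ?thesis"
    then have xa: "x < b * c2 - c2 + 1" and ya: "y \<le> b * c2 - c2" unfolding D by auto
    have qj: "q ^ j \<le> b" unfolding b_def using q2 je True by (intro power_increasing) auto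
    have "q ^ j * y \<le> b * (b * c2 - c2)" using qj ya by (rule mult_le_mono)
    moreover have "b * (b * c2 - c2) = b * b * c2 - b * c2" by (simp add: diff_mult_distrib2 mult.assoc)
    ultimately have B: "q ^ j * y \<le> b * b * c2 - b * c2" by simp
    have bb: "b * b * c2 \<ge> b * c2" using b1 by simp
    obtain c where c: "x + q ^ j * y = (b * b * c2 - 1) * c" using dv unfolding e2 by blast
    have "c \<noteq> 0"
    proof
      assume "c = 0"
      then have "x + q ^ j * y = 0" using c by simp
      then show False using x1 by simp
    qed
    moreover have "\<not> c \<ge> 2"
    proof
      assume "c \<ge> 2"
      then have "(b * b * c2 - 1) * 2 \<le> (b * b * c2 - 1) * c" by (rule mult_le_mono2)
      then show False using c B xa bb bc c2 by linarith
    qed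
    ultimately have "c = 1" by linarith
    then have "x + q ^ j * y = b * b * c2 - 1" using c by simp
    then show False using B xa bb bc c2 by linarith
  qed
qed


lemma arith_noBad:
  fixes q m x y e :: nat
  assumes q2: "q \<ge> 2" and m1: "m \<ge> 1" and x1: "1 \<le> x" and xn: "x < q ^ (2 * m) - 1"
    and y1: "1 \<le> y" and yn: "y < q ^ (2 * m) - 1"
    and dv: "(q ^ (2 * m) - 1) dvd (x + q ^ (2 * e + 1) * y)"
  shows "Dm q m \<le> x \<or> Dm q m \<le> y"
proof -
  define n where "n = q ^ (2 * m) - 1"
  define r where "r = (2 * e + 1) mod (2 * m)"
  define d where "d = (2 * e + 1) div (2 * m)"
  have rm: "r < 2 * m" unfolding r_def using m1 by simp
  have ed: "2 * e + 1 = 2 * m * d + r" unfolding r_def d_def by simp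
  have oddr: "odd r"
  proof -
    obtain t where t: "t = m * d" by blast
    have "2 * e + 1 = 2 * t + r" using ed t by simp
    then show ?thesis by presburger
  qed
  have q2m: "q ^ (2 * m) = n + 1"
  proof -
    have "q ^ 1 \<le> q ^ (2 * m)" using q2 m1 by (intro power_increasing) auto
    then show ?thesis unfolding n_def using q2 by simp
  qed
  have cg: "[q ^ (2 * m) = 1] (mod n)" unfolding q2m cong_def by (metis add.commute mod_add_self2)
  have "q ^ (2 * e + 1) = (q ^ (2 * m)) ^ d * q ^ r" unfolding ed by (simp add: power_add power_mult)
  moreover have "[(q ^ (2 * m)) ^ d * q ^ r = 1 ^ d * q ^ r] (mod n)"
    by (intro cong_mult cong_pow cg cong_refl)
  ultimately have cg2: "[q ^ (2 * e + 1) = q ^ r] (mod n)" by simp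
  have "[x + q ^ (2 * e + 1) * y = x + q ^ r * y] (mod n)"
    by (intro cong_add cong_mult cg2 cong_refl)
  then have dv2: "n dvd (x + q ^ r * y)" using dv cong_dvd_iff unfolding n_def by blast
  show ?thesis
  proof (cases "r \<le> m")
    case True
    have "even m \<Longrightarrow> r < m" using True oddr by (cases "r = m") auto
    then show ?thesis using arithA[OF q2 m1 xn x1 _ True] dv2 unfolding n_def by blast
  next
    case False
    define j where "j = 2 * m - r"
    have jr: "j + r = 2 * m" unfolding j_def using rm by simp
    have jm: "j < m" unfolding j_def using False rm by linarith
    have "n dvd q ^ j * (x + q ^ r * y)" using dv2 by simp
    moreover have "q ^ j * (x + q ^ r * y) = q ^ j * x + q ^ (2 * m) * y"
      unfolding jr[symmetric] by (simp add: power_add algebra_simps)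
    moreover have "[q ^ j * x + q ^ (2 * m) * y = q ^ j * x + 1 * y] (mod n)"
      by (intro cong_add cong_mult cg cong_refl)
    ultimately have "n dvd (q ^ j * x + 1 * y)" using cong_dvd_iff by metis
    then have "n dvd (y + q ^ j * x)" by (simp add: add.commute)
    then have "Dm q m \<le> y \<or> Dm q m \<le> x"
      using arithA[OF q2 m1 yn y1 _ _ , of j x] jm unfolding n_def by auto
    then show ?thesis by blast
  qed
qed

lemma arith_wit:
  fixes q m :: nat
  assumes q2: "q \<ge> 2" and m1: "m \<ge> 1" and m2: "m \<noteq> 2"
  shows "\<exists>x y e. 1 \<le> x \<and> x \<le> Dm q m \<and> 1 \<le> y \<and> y \<le> Dm q m \<and>
           (q ^ (2 * m) - 1) dvd (x + q ^ (2 * e + 1) * y)"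
proof (cases "even m")
  case False
  define a where "a = q ^ m"
  have "q ^ 1 \<le> q ^ m" using q2 m1 by (intro power_increasing) auto
  then have a2: "a \<ge> 2" using q2 unfolding a_def by simp
  have N: "q ^ (2 * m) = a * a" unfolding a_def by (simp add: mult_2 power_add)
  have D: "Dm q m = a - 1" using False unfolding Dm_def a_def by simp
  have em: "2 * (m div 2) + 1 = m" using False by presburger
  have "a * (a - 1) = a * a - a" by (simp add: diff_mult_distrib2)
  moreover have "a * a \<ge> a" using a2 by simp
  ultimately have "(a - 1) + a * (a - 1) = a * a - 1" using a2 by linarith
  then have "(q ^ (2 * m) - 1) dvd ((a - 1) + q ^ (2 * (m div 2) + 1) * (a - 1))"
    unfolding em N by (simp add: a_def)
  then show ?thesis using a2 D by (intro exI[of _ "a - 1"] exI[of _ "m div 2"]) auto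
next
  case True
  then have m4: "m \<ge> 4" using m1 m2 by presburger
  define b where "b = q ^ (m - 1)"
  define c2 where "c2 = q ^ 2"
  have c2: "c2 \<ge> 4" unfolding c2_def using q2 power_mono[of 2 q 2] by simp
  have "q ^ 3 \<le> q ^ (m - 1)" using q2 m4 by (intro power_increasing) auto
  moreover have "q ^ 3 = q * c2" unfolding c2_def by (simp add: power3_eq_cube power2_eq_square)
  moreover have "q * c2 \<ge> 2 * c2" using q2 by simp
  ultimately have bc2: "b \<ge> 2 * c2" unfolding b_def by linarith
  have e1: "q ^ (m + 1) = b * c2" unfolding b_def c2_def using m1
    by (simp flip: power_add)
  have ex: "2 * m = (m - 1) + (m - 1) + 2" using m1 by simp
  have e2: "q ^ (2 * m) = b * b * c2" unfolding b_def c2_def by (simp only: ex power_add)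
  have D: "Dm q m = b * c2 - c2 + 1" using True unfolding Dm_def e1 c2_def by simp
  have em: "2 * ((m - 2) div 2) + 1 = m - 1" using True m4 by presburger
  have bc: "b * c2 \<ge> 4 * b" using c2 by simp
  have bbc: "b * b * c2 \<ge> b * c2"
  proof -
    have "b \<ge> 1" using bc2 c2 by simp
    then show ?thesis by simp
  qed
  have "b * (b * c2 - c2) = b * b * c2 - b * c2" by (simp add: diff_mult_distrib2 mult.assoc)
  then have m: "b * (b * c2 - c2 + 1) = b * b * c2 - b * c2 + b"
    using bc2 by (simp add: distrib_left)
  have "(b * c2 - b - 1) + b * (b * c2 - c2 + 1) = b * b * c2 - 1"
    unfolding m using bc bbc bc2 c2 by linarith
  then have "(q ^ (2 * m) - 1) dvd ((b * c2 - b - 1) + q ^ (2 * ((m - 2) div 2) + 1) * (b * c2 - c2 + 1))"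
    unfolding em e2 by (simp add: b_def)
  moreover have "1 \<le> b * c2 - b - 1" "b * c2 - b - 1 \<le> b * c2 - c2 + 1" using bc bc2 c2 by linarith+
  ultimately show ?thesis unfolding D
    by (intro exI[of _ "b * c2 - b - 1"] exI[of _ "b * c2 - c2 + 1"] exI[of _ "(m - 2) div 2"]) auto
qed

lemma arith_iff:
  fixes q m \<delta> :: nat
  assumes q2: "q \<ge> 2" and m1: "m \<ge> 1" and m2: "m \<noteq> 2" and dn: "\<delta> \<le> q ^ (2 * m) - 1"
  shows "(\<exists>x y e. 1 \<le> x \<and> x < \<delta> \<and> 1 \<le> y \<and> y < \<delta> \<and> (q ^ (2 * m) - 1) dvd (x + q ^ (2 * e + 1) * y))
         \<longleftrightarrow> Dm q m < \<delta>"
proof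
  assume "\<exists>x y e. 1 \<le> x \<and> x < \<delta> \<and> 1 \<le> y \<and> y < \<delta> \<and> (q ^ (2 * m) - 1) dvd (x + q ^ (2 * e + 1) * y)"
  then obtain x y e where xy: "1 \<le> x" "x < \<delta>" "1 \<le> y" "y < \<delta>" "(q ^ (2 * m) - 1) dvd (x + q ^ (2 * e + 1) * y)"
    by blast
  have "Dm q m \<le> x \<or> Dm q m \<le> y"
    using arith_noBad[OF q2 m1 xy(1) _ xy(3) _ xy(5)] xy dn by linarith
  then show "Dm q m < \<delta>" using xy by linarith
next
  assume "Dm q m < \<delta>"
  then show "\<exists>x y e. 1 \<le> x \<and> x < \<delta> \<and> 1 \<le> y \<and> y < \<delta> \<and> (q ^ (2 * m) - 1) dvd (x + q ^ (2 * e + 1) * y)"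
    using arith_wit[OF q2 m1 m2] by (meson le_less_trans)
qed


theorem mainTheorem3:
  fixes q m n \<delta> :: nat and \<alpha> :: "'b::{field,finite}"
  assumes "prime_power q"
    and "m \<ge> 1" and "m \<noteq> 2"
    and "card (UNIV :: 'b set) = q ^ (2 * m)"
    and "primitive_elem \<alpha>"
    and "n = q ^ (2 * m) - 1"
    and "2 \<le> \<delta>" and "\<delta> \<le> n"
  shows "herm_dual q n (BCH \<alpha> n (q^2) \<delta>) \<subseteq> BCH \<alpha> n (q^2) \<delta> \<longleftrightarrow>
         int \<delta> \<le> int q ^ (m + of_bool (even m)) - 1 - (int q ^ 2 - 2) * of_bool (even m)"
proof -
  interpret bchs q m \<alpha> using assms(1,2,4,5) by unfold_locales auto
  have n: "n = nn" using assms(6) by (simp add: nn_def)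
  have q2: "q \<ge> 2" by (rule q_ge2)
  have dn: "\<delta> \<le> nn" using assms(8) n by simp
  have "bad \<delta> \<longleftrightarrow> (\<exists>x y e. 1 \<le> x \<and> x < \<delta> \<and> 1 \<le> y \<and> y < \<delta> \<and> nn dvd (x + q ^ (2 * e + 1) * y))"
    unfolding bad_def alpha_one ..
  also have "\<dots> \<longleftrightarrow> Dm q m < \<delta>"
    using arith_iff[OF q2 assms(2) assms(3), of \<delta>] dn unfolding nn_def by simp
  finally have badiff: "bad \<delta> \<longleftrightarrow> Dm q m < \<delta>" .
  have contain: "herm_dual q n (BCH \<alpha> n (q^2) \<delta>) \<subseteq> BCH \<alpha> n (q^2) \<delta> \<longleftrightarrow> \<not> bad \<delta>"
    using suff nec[OF _ dn] unfolding n by blast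
  have intf: "int \<delta> \<le> int q ^ (m + of_bool (even m)) - 1 - (int q ^ 2 - 2) * of_bool (even m)
      \<longleftrightarrow> \<delta> \<le> Dm q m"
  proof (cases "even m")
    case True
    have "q ^ 2 \<le> q ^ (m + 1)" using q2 assms(2) by (intro power_increasing) auto
    then have d: "int (Dm q m) = int q ^ (m + 1) - int q ^ 2 + 1"
      using True unfolding Dm_def by (simp add: of_nat_diff)
    have e: "int q ^ (m + of_bool (even m)) - 1 - (int q ^ 2 - 2) * of_bool (even m) = int (Dm q m)"
      unfolding d using True by simp
    show ?thesis unfolding e by simp
  next
    case False
    have "1 \<le> q ^ m" using q2 by simp
    then have d: "int (Dm q m) = int q ^ m - 1"
      using False unfolding Dm_def by (simp add: of_nat_diff)
    have e: "int q ^ (m + of_bool (even m)) - 1 - (int q ^ 2 - 2) * of_bool (even m) = int (Dm q m)"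
      unfolding d using False by simp
    show ?thesis unfolding e by simp
  qed
  show ?thesis using contain badiff intf by linarith
qed

end
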